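(* Let $R$ be a finite commutative principal ideal ring with unity. Suppose that $R$ has exactly two associated prime ideals $p_1,p_2$ (i.e. $\lvert \operatorname{Ass}(R)\rvert=2$) and that $p_1\cap p_2=\{0\}$. Then the complement $\overline{\Gamma(R)}$ of the zero divisor graph of $R$ is a divisor graph.
   Context: $\operatorname{Ass}(R)$ is the set of associated primes of $R$ as an $R$-module, i.e. prime ideals of $R$ of the form $\operatorname{ann}(x)$ for some nonzero $x\in R$. The zero divisor graph $\Gamma(R)$ has vertex set the nonzero zero divisors of $R$, distinct $a,b$ adjacent iff $ab=0$; its complement $\overline{\Gamma(R)}$ has the same vertex set with distinct $a,b$ adjacent iff $ab\neq 0$. For a nonempty set $T$ of positive integers, the divisor graph $G(T)$ has vertex set $T$, with distinct $i,j$ adjacent iff $i\mid j$ or $j\mid i$; a graph is a divisor graph if it is isomorphic to some $G(T)$. *)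

theory Defs
  imports Main
begin

definition is_ideal :: "'a::comm_ring_1 set \<Rightarrow> bool" where
  "is_ideal I \<longleftrightarrow> 0 \<in> I \<and> (\<forall>x\<in>I. \<forall>y\<in>I. x + y \<in> I) \<and> (\<forall>x\<in>I. - x \<in> I)
     \<and> (\<forall>r x. x \<in> I \<longrightarrow> r * x \<in> I)"

definition principal_ideal_ring :: "'a::comm_ring_1 itself \<Rightarrow> bool" where
  "principal_ideal_ring _ \<longleftrightarrow> (\<forall>I::'a set. is_ideal I \<longrightarrow> (\<exists>a. I = {r * a | r. True}))"

definition is_prime_ideal :: "'a::comm_ring_1 set \<Rightarrow> bool" where
  "is_prime_ideal P \<longleftrightarrow> is_ideal P \<and> P \<noteq> UNIV \<and> (\<forall>a b. a * b \<in> P \<longrightarrow> a \<in> P \<or> b \<in> P)"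

definition ann :: "'a::comm_ring_1 \<Rightarrow> 'a set" where
  "ann x = {r. r * x = 0}"

definition Ass :: "'a::comm_ring_1 itself \<Rightarrow> 'a set set" where
  "Ass _ = {P. is_prime_ideal P \<and> (\<exists>x. x \<noteq> 0 \<and> P = ann x)}"

definition zd_vertices :: "'a::comm_ring_1 itself \<Rightarrow> 'a set" where
  "zd_vertices _ = {a. a \<noteq> 0 \<and> (\<exists>b. b \<noteq> 0 \<and> a * b = 0)}"

definition comp_zd_adj :: "'a::comm_ring_1 \<Rightarrow> 'a \<Rightarrow> bool" where
  "comp_zd_adj a b \<longleftrightarrow> a \<noteq> b \<and> a * b \<noteq> 0"

definition divisor_graph :: "'v set \<Rightarrow> ('v \<Rightarrow> 'v \<Rightarrow> bool) \<Rightarrow> bool" where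
  "divisor_graph V adj \<longleftrightarrow> (\<exists>(T::nat set) f. T \<noteq> {} \<and> (\<forall>t\<in>T. 0 < t) \<and> bij_betw f V T \<and>
     (\<forall>a\<in>V. \<forall>b\<in>V. adj a b \<longleftrightarrow> (f a \<noteq> f b \<and> (f a dvd f b \<or> f b dvd f a))))"

end

theory Submission
  imports Defs
begin

lemma pow23_ndvd1: "\<not> (2::nat)^(Suc m) dvd 3^(Suc n)"
proof
  assume "(2::nat)^(Suc m) dvd 3^(Suc n)"
  then have "(2::nat) dvd 3^(Suc n)" by (meson dvd_power dvd_trans zero_less_Suc)
  then show False by simp
qed

lemma pow23_ndvd2: "\<not> (3::nat)^(Suc n) dvd 2^(Suc m)"
proof
  assume "(3::nat)^(Suc n) dvd 2^(Suc m)"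
  then have "(3::nat) dvd 2^(Suc m)" by (meson dvd_power dvd_trans zero_less_Suc)
  moreover have "(2::nat)^(Suc m) mod 3 \<noteq> 0"
  proof (induction m)
    case 0 then show ?case by simp
  next
    case (Suc m)
    have "(2::nat)^(Suc (Suc m)) mod 3 = (2 * (2^(Suc m) mod 3)) mod 3"
      by (simp add: mod_mult_right_eq)
    moreover have "2^(Suc m) mod 3 = (1::nat) \<or> 2^(Suc m) mod 3 = (2::nat)"
      using Suc by linarith
    ultimately show ?case by auto
  qed
  ultimately show False by (simp add: dvd_eq_mod_eq_0)
qed

lemma zd_in_ass:
  fixes a b :: "'a::{comm_ring_1,finite}"
  assumes "a * b = 0" "b \<noteq> 0"
  shows "\<exists>P\<in>Ass TYPE('a). a \<in> P"
proof -
  let ?S = "{ann c | c. c \<noteq> 0 \<and> a \<in> ann c}"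
  have fin: "finite ?S" by simp
  have ne: "?S \<noteq> {}" using assms by (auto simp: ann_def mult.commute)
  obtain m where mS: "m \<in> ?S" and mmax: "\<forall>x\<in>?S. m \<le> x \<longrightarrow> m = x"
    using finite_has_maximal[OF fin ne] by blast
  obtain c where c: "c \<noteq> 0" "a \<in> ann c" "m = ann c" using mS by blast
  have prime: "is_prime_ideal (ann c)"
    unfolding is_prime_ideal_def is_ideal_def
  proof (intro conjI allI impI ballI)
    show "ann c \<noteq> UNIV"
    proof
      assume "ann c = UNIV"
      then have "(1::'a) \<in> ann c" by simp
      then show False using c(1) by (simp add: ann_def)
    qed
  next
    fix x y assume xy: "x * y \<in> ann c"
    show "x \<in> ann c \<or> y \<in> ann c"
    proof (cases "x \<in> ann c")
      case False
      then have xc: "x * c \<noteq> 0" by (simp add: ann_def mult.commute)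
      have sub: "ann c \<subseteq> ann (x * c)" unfolding ann_def by (auto, metis mult.left_commute mult_zero_right)
      have "a \<in> ann (x * c)" using c sub by auto
      then have "ann (x * c) \<in> ?S" using xc by blast
      then have "ann c = ann (x * c)" using mmax sub c by auto
      moreover have "y \<in> ann (x * c)" using xy by (simp add: ann_def algebra_simps)
      ultimately show ?thesis by simp
    qed simp
  qed (auto simp: ann_def algebra_simps)
  then have "ann c \<in> Ass TYPE('a)" using c by (auto simp: Ass_def)
  then show ?thesis using c by blast
qed

lemma powdvd: "(k::nat)^m dvd k^n \<or> k^n dvd k^m"
  by (metis le_imp_power_dvd nat_le_linear)

theorem theorem2p8:
  assumes pir: "principal_ideal_ring TYPE('a::{comm_ring_1, finite})"
    and two: "card (Ass TYPE('a)) = 2"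
    and p12: "Ass TYPE('a) = {p1, p2}"
    and inter: "p1 \<inter> p2 = {0}"
  shows "divisor_graph (zd_vertices TYPE('a)) (comp_zd_adj :: 'a \<Rightarrow> 'a \<Rightarrow> bool)"
proof -
  have neq: "p1 \<noteq> p2" using two p12 by auto
  have P1: "is_prime_ideal p1" "\<exists>x. x \<noteq> 0 \<and> p1 = ann x" using p12 by (auto simp: Ass_def)
  have P2: "is_prime_ideal p2" "\<exists>x. x \<noteq> 0 \<and> p2 = ann x" using p12 by (auto simp: Ass_def)
  define Z where "Z = zd_vertices TYPE('a)"
  have Zeq: "Z = (p1 \<union> p2) - {0}"
  proof
    show "Z \<subseteq> (p1 \<union> p2) - {0}"
    proof
      fix a assume "a \<in> Z"
      then obtain b where "a \<noteq> 0" "b \<noteq> 0" "a * b = 0" by (auto simp: Z_def zd_vertices_def)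
      then show "a \<in> (p1 \<union> p2) - {0}" using zd_in_ass[of a b] p12 by auto
    qed
  next
    show "(p1 \<union> p2) - {0} \<subseteq> Z"
    proof
      fix a assume a: "a \<in> (p1 \<union> p2) - {0}"
      then obtain x where "x \<noteq> 0" "a \<in> ann x" using P1(2) P2(2) by blast
      then show "a \<in> Z" using a by (auto simp: Z_def zd_vertices_def ann_def)
    qed
  qed
  have id1: "is_ideal p1" "\<forall>a b. a * b \<in> p1 \<longrightarrow> a \<in> p1 \<or> b \<in> p1"
    using P1(1) by (auto simp: is_prime_ideal_def)
  have id2: "is_ideal p2" "\<forall>a b. a * b \<in> p2 \<longrightarrow> a \<in> p2 \<or> b \<in> p2"
    using P2(1) by (auto simp: is_prime_ideal_def)
  have z1: "0 \<in> p1" and z2: "0 \<in> p2" using id1 id2 by (auto simp: is_ideal_def)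
  have m1: "\<And>r x. x \<in> p1 \<Longrightarrow> r * x \<in> p1" and m2: "\<And>r x. x \<in> p2 \<Longrightarrow> r * x \<in> p2"
    using id1 id2 by (auto simp: is_ideal_def)
  have same1: "a * b \<noteq> 0" if "a \<in> p1" "b \<in> p1" "a \<noteq> 0" "b \<noteq> 0" for a b
  proof
    assume "a * b = 0"
    then have "a \<in> p2 \<or> b \<in> p2" using id2 z2 by metis
    then show False using that inter by auto
  qed
  have same2: "a * b \<noteq> 0" if "a \<in> p2" "b \<in> p2" "a \<noteq> 0" "b \<noteq> 0" for a b
  proof
    assume "a * b = 0"
    then have "a \<in> p1 \<or> b \<in> p1" using id1 z1 by metis
    then show False using that inter by auto
  qed
  have cross: "a * b = 0" if "a \<in> p1" "b \<in> p2" for a b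
  proof -
    have "a * b \<in> p1" using m1[OF that(1), of b] by (simp add: mult.commute)
    moreover have "a * b \<in> p2" using m2[OF that(2)] by simp
    ultimately show ?thesis using inter by auto
  qed
  have Zne: "Z \<noteq> {}"
  proof
    assume "Z = {}"
    then have "p1 \<subseteq> {0}" "p2 \<subseteq> {0}" using Zeq by auto
    then show False using z1 z2 neq by auto
  qed
  obtain g :: "'a \<Rightarrow> nat" where g: "inj g"
    using finite_imp_inj_to_nat_seg[of "UNIV :: 'a set"] by auto
  define f where "f a = (if a \<in> p1 then (2::nat)^(Suc (g a)) else 3^(Suc (g a)))" for a
  have two_ne: "(2::nat)^(Suc m) \<noteq> 3^(Suc n)" for m n
    using pow23_ndvd1[of m n] by auto
  have finj: "inj f"
  proof (rule injI)
    fix x y assume "f x = f y"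
    then have "g x = g y"
    proof (cases "x \<in> p1"; cases "y \<in> p1")
      assume "f x = f y" "x \<in> p1" "y \<notin> p1"
      then show ?thesis using two_ne[of "g x" "g y"] by (simp add: f_def)
    next
      assume "f x = f y" "x \<notin> p1" "y \<in> p1"
      then show ?thesis using two_ne[of "g y" "g x"] by (simp add: f_def)
    qed (auto simp: f_def)
    then show "x = y" using g by (simp add: inj_def)
  qed
  show ?thesis
    unfolding divisor_graph_def Z_def[symmetric]
  proof (intro exI conjI)
    show "f ` Z \<noteq> {}" using Zne by simp
    show "\<forall>t\<in>f ` Z. 0 < t" by (auto simp: f_def)
    show "bij_betw f Z (f ` Z)" using finj by (simp add: bij_betw_def inj_on_subset[OF _ subset_UNIV])
    show "\<forall>a\<in>Z. \<forall>b\<in>Z. comp_zd_adj a b = (f a \<noteq> f b \<and> (f a dvd f b \<or> f b dvd f a))"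
    proof (intro ballI)
      fix a b assume a: "a \<in> Z" and b: "b \<in> Z"
      have fab: "f a \<noteq> f b \<longleftrightarrow> a \<noteq> b" using finj by (auto simp: inj_def)
      show "comp_zd_adj a b = (f a \<noteq> f b \<and> (f a dvd f b \<or> f b dvd f a))"
      proof (cases "a \<in> p1")
        case True
        show ?thesis
        proof (cases "b \<in> p1")
          case True
          have "f a = 2^Suc (g a)" "f b = 2^Suc (g b)" using \<open>a \<in> p1\<close> True by (simp_all add: f_def del: power_Suc)
          then have "f a dvd f b \<or> f b dvd f a" using powdvd by metis
          moreover have "a * b \<noteq> 0" using same1[of a b] \<open>a \<in> p1\<close> True a b Zeq by blast
          ultimately show ?thesis using fab unfolding comp_zd_adj_def by blast
        next
          case False
          then have "b \<in> p2" using b Zeq by auto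
          then have "a * b = 0" using cross \<open>a \<in> p1\<close> by auto
          moreover have "\<not> f a dvd f b" "\<not> f b dvd f a"
            using \<open>a \<in> p1\<close> False pow23_ndvd1 pow23_ndvd2 by (auto simp: f_def)
          ultimately show ?thesis by (auto simp: comp_zd_adj_def)
        qed
      next
        case False
        then have ap2: "a \<in> p2" using a Zeq by auto
        show ?thesis
        proof (cases "b \<in> p1")
          case True
          then have "b * a = 0" using cross ap2 by auto
          then have "a * b = 0" by (simp add: mult.commute)
          moreover have "\<not> f a dvd f b" "\<not> f b dvd f a"
            using \<open>a \<notin> p1\<close> True pow23_ndvd1 pow23_ndvd2 by (auto simp: f_def)
          ultimately show ?thesis by (auto simp: comp_zd_adj_def)
        next
          case bF: False
          then have bp2: "b \<in> p2" using b Zeq by auto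
          have "f a = 3^Suc (g a)" "f b = 3^Suc (g b)" using False bF by (simp_all add: f_def del: power_Suc)
          then have "f a dvd f b \<or> f b dvd f a" using powdvd by metis
          moreover have "a * b \<noteq> 0" using same2[of a b] ap2 bp2 a b Zeq by blast
          ultimately show ?thesis using fab unfolding comp_zd_adj_def by blast
        qed
      qed
    qed
  qed
qed

end
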